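(* Suppose the Turing degree $\mathbf d$ is loquaciously high for isomorphism. Then: (1) there are $D\in\mathbf d$ and Turing functionals $\Phi,\Psi$ with $\Phi^D(i,j,n)$ and $\Psi^D(i,j,n)$ convergent for all $i,j,n$, such that whenever $\mathcal M_i\cong\mathcal M_j$, the map $\Phi^D(i,j,\cdot)$ is an isomorphism from $\mathcal M_i$ onto $\mathcal M_j$ and $\Psi^D(i,j,\cdot)$ is its inverse; (2) there are $D\in\mathbf d$ and a Turing functional $\Theta$ witnessing that $\mathbf d$ is loquaciously high for isomorphism such that moreover, whenever $\mathcal M_i\cong\mathcal M_j$, the map $\Theta^D(j,i,\cdot)$ is the inverse of $\Theta^D(i,j,\cdot)$.
   Context: Fix a standard effective listing $(\mathcal M_i:i\in\omega)$ of all computable structures (in computable languages). A degree $\mathbf d$ is loquaciously high for isomorphism if there are $D\in\mathbf d$ and a Turing functional $\Phi$ such that $\Phi^D(i,j,n)$ converges for all $i,j,n$, and whenever $\mathcal M_i\cong\mathcal M_j$, the function $n\mapsto\Phi^D(i,j,n)$ is an isomorphism from $\mathcal M_i$ onto $\mathcal M_j$. *)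

theory Defs
  imports Main "HOL-Library.Nat_Bijection"
begin

text \<open>Multiple arguments are coded with the Cantor pairing prod_encode.
  A Turing functional is such a term; Phi with oracle D is its semantics.\<close>

datatype recf =
    ZeroF | SucF | FstF | SndF | OracleF
  | CompF recf recf
  | PairF recf recf
  | RecF recf recf
  | MuF recf

inductive eval :: "nat set \<Rightarrow> recf \<Rightarrow> nat \<Rightarrow> nat \<Rightarrow> bool" for D :: "nat set" where
  ev_zero: "eval D ZeroF x 0"
| ev_suc: "eval D SucF x (Suc x)"
| ev_fst: "eval D FstF x (fst (prod_decode x))"
| ev_snd: "eval D SndF x (snd (prod_decode x))"
| ev_orc: "eval D OracleF x (if x \<in> D then 1 else 0)"
| ev_comp: "eval D g x y \<Longrightarrow> eval D f y z \<Longrightarrow> eval D (CompF f g) x z"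
| ev_pair: "eval D f x y \<Longrightarrow> eval D g x z \<Longrightarrow> eval D (PairF f g) x (prod_encode (y, z))"
| ev_rec0: "eval D f p y \<Longrightarrow> eval D (RecF f g) (prod_encode (p, 0)) y"
| ev_recS: "eval D (RecF f g) (prod_encode (p, n)) y \<Longrightarrow>
            eval D g (prod_encode (p, prod_encode (n, y))) z \<Longrightarrow>
            eval D (RecF f g) (prod_encode (p, Suc n)) z"
| ev_mu: "eval D f (prod_encode (p, n)) 0 \<Longrightarrow>
          (\<forall>m<n. \<exists>y. y \<noteq> 0 \<and> eval D f (prod_encode (p, m)) y) \<Longrightarrow>
          eval D (MuF f) p n"

definition converges :: "nat set \<Rightarrow> recf \<Rightarrow> nat \<Rightarrow> bool" where
  "converges D f x \<longleftrightarrow> (\<exists>y. eval D f x y)"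

definition value_of :: "nat set \<Rightarrow> recf \<Rightarrow> nat \<Rightarrow> nat" where
  "value_of D f x = (THE y. eval D f x y)"

definition code3 :: "nat \<Rightarrow> nat \<Rightarrow> nat \<Rightarrow> nat" where
  "code3 i j n = prod_encode (i, prod_encode (j, n))"

definition total3 :: "nat set \<Rightarrow> recf \<Rightarrow> bool" where
  "total3 D \<Phi> \<longleftrightarrow> (\<forall>i j n. converges D \<Phi> (code3 i j n))"

definition app3 :: "nat set \<Rightarrow> recf \<Rightarrow> nat \<Rightarrow> nat \<Rightarrow> nat \<Rightarrow> nat" where
  "app3 D \<Phi> i j n = value_of D \<Phi> (code3 i j n)"

definition turing_le :: "nat set \<Rightarrow> nat set \<Rightarrow> bool" where
  "turing_le A B \<longleftrightarrow> (\<exists>f. \<forall>x. eval B f x (if x \<in> A then 1 else 0))"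

definition turing_degree_of :: "nat set \<Rightarrow> nat set set" where
  "turing_degree_of A = {B. turing_le A B \<and> turing_le B A}"

definition is_turing_degree :: "nat set set \<Rightarrow> bool" where
  "is_turing_degree d \<longleftrightarrow> (\<exists>A. d = turing_degree_of A)"

lemma prod_decode_le1: "fst (prod_decode r) \<le> r"
  by (metis le_prod_encode_1 prod.collapse prod_decode_inverse)

lemma prod_decode_le2: "snd (prod_decode r) \<le> r"
  by (metis le_prod_encode_2 prod.collapse prod_decode_inverse)

function recf_of_nat :: "nat \<Rightarrow> recf" where
  "recf_of_nat n =
     (if n mod 9 = 0 then ZeroF
      else if n mod 9 = 1 then SucF
      else if n mod 9 = 2 then FstF
      else if n mod 9 = 3 then SndF
      else if n mod 9 = 4 then OracleF
      else if n mod 9 = 5 then CompF (recf_of_nat (fst (prod_decode (n div 9))))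
                                     (recf_of_nat (snd (prod_decode (n div 9))))
      else if n mod 9 = 6 then PairF (recf_of_nat (fst (prod_decode (n div 9))))
                                     (recf_of_nat (snd (prod_decode (n div 9))))
      else if n mod 9 = 7 then RecF (recf_of_nat (fst (prod_decode (n div 9))))
                                    (recf_of_nat (snd (prod_decode (n div 9))))
      else MuF (recf_of_nat (n div 9)))"
  by auto
termination
proof (relation "measure id")
  have lt: "n div 9 < n" if "n mod 9 \<noteq> 0" for n :: nat
  proof -
    have "n > 0" using that by (cases n) auto
    then show ?thesis by simp
  qed
  show "wf (measure id)" by simp
  fix n :: nat
  assume a: "n mod 9 \<noteq> 0"
  then show "(fst (prod_decode (n div 9)), n) \<in> measure id"
    using lt[OF a] prod_decode_le1[of "n div 9"] by simp
  show "(snd (prod_decode (n div 9)), n) \<in> measure id"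
    using lt[OF a] prod_decode_le2[of "n div 9"] by simp
  show "(fst (prod_decode (n div 9)), n) \<in> measure id"
    using lt[OF a] prod_decode_le1[of "n div 9"] by simp
  show "(snd (prod_decode (n div 9)), n) \<in> measure id"
    using lt[OF a] prod_decode_le2[of "n div 9"] by simp
  show "(fst (prod_decode (n div 9)), n) \<in> measure id"
    using lt[OF a] prod_decode_le1[of "n div 9"] by simp
  show "(snd (prod_decode (n div 9)), n) \<in> measure id"
    using lt[OF a] prod_decode_le2[of "n div 9"] by simp
  show "(n div 9, n) \<in> measure id" using lt[OF a] by simp
qed

text \<open>Symbol k of the language: None = not in the language;
  Some (True, a) = relation symbol of arity a; Some (False, a) = function
  symbol of arity a (constants are 0-ary function symbols).\<close>

record struc =
  sig :: "nat \<Rightarrow> (bool \<times> nat) option"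
  rel :: "nat \<Rightarrow> nat list \<Rightarrow> bool"
  fn  :: "nat \<Rightarrow> nat list \<Rightarrow> nat"

definition is_iso :: "(nat \<Rightarrow> nat) \<Rightarrow> struc \<Rightarrow> struc \<Rightarrow> bool" where
  "is_iso f A B \<longleftrightarrow>
     sig A = sig B \<and> bij f \<and>
     (\<forall>k xs. sig A k = Some (True, length xs) \<longrightarrow> (rel A k xs \<longleftrightarrow> rel B k (map f xs))) \<and>
     (\<forall>k xs. sig A k = Some (False, length xs) \<longrightarrow> f (fn A k xs) = fn B k (map f xs))"

definition isomorphic :: "struc \<Rightarrow> struc \<Rightarrow> bool" where
  "isomorphic A B \<longleftrightarrow> (\<exists>f. is_iso f A B)"

definition sig_decode :: "nat \<Rightarrow> (bool \<times> nat) option" where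
  "sig_decode c = (case c of 0 \<Rightarrow> None
                    | Suc m \<Rightarrow> Some (fst (prod_decode m) = 0, snd (prod_decode m)))"

definition structure_of :: "(nat \<Rightarrow> nat) \<Rightarrow> struc" where
  "structure_of g =
    (let s = (\<lambda>k. sig_decode (g (prod_encode (0, k)))) in
     \<lparr> sig = s,
       rel = (\<lambda>k xs. s k = Some (True, length xs) \<and>
                     g (prod_encode (1, prod_encode (k, list_encode xs))) \<noteq> 0),
       fn = (\<lambda>k xs. if s k = Some (False, length xs)
                    then g (prod_encode (2, prod_encode (k, list_encode xs))) else 0) \<rparr>)"

text \<open>The standard effective listing of all computable structures:
  index e names the structure coded by the e-th (oracle-free) partial
  recursive function if that function is total, and nothing otherwise.\<close>
definition Mlist :: "nat \<Rightarrow> struc option" where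
  "Mlist e = (if \<forall>x. converges {} (recf_of_nat e) x
              then Some (structure_of (value_of {} (recf_of_nat e)))
              else None)"

definition iso_indices :: "nat \<Rightarrow> nat \<Rightarrow> bool" where
  "iso_indices i j \<longleftrightarrow> (\<exists>A B. Mlist i = Some A \<and> Mlist j = Some B \<and> isomorphic A B)"

definition structure_at :: "nat \<Rightarrow> struc" where
  "structure_at i = the (Mlist i)"

definition loq_high :: "nat set set \<Rightarrow> bool" where
  "loq_high d \<longleftrightarrow>
     (\<exists>D\<in>d. \<exists>\<Phi>. total3 D \<Phi> \<and>
        (\<forall>i j. iso_indices i j \<longrightarrow>
               is_iso (app3 D \<Phi> i j) (structure_at i) (structure_at j)))"

end

theory Submission
  imports Defs
begin

abbreviation pe where "pe a b \<equiv> prod_encode (a, b)"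
abbreviation p1 where "p1 x \<equiv> fst (prod_decode x)"
abbreviation p2 where "p2 x \<equiv> snd (prod_decode x)"

lemma pe_p: "pe (p1 x) (p2 x) = x"
  by (metis prod.collapse prod_decode_inverse)

inductive_cases evZ: "eval D ZeroF x y"
inductive_cases evS: "eval D SucF x y"
inductive_cases evF: "eval D FstF x y"
inductive_cases evSn: "eval D SndF x y"
inductive_cases evO: "eval D OracleF x y"
inductive_cases evC: "eval D (CompF f g) x y"
inductive_cases evP: "eval D (PairF f g) x y"
inductive_cases evR: "eval D (RecF f g) x y"
inductive_cases evM: "eval D (MuF f) x y"

lemma eval_det: "eval D f x y \<Longrightarrow> eval D f x y' \<Longrightarrow> y' = y"
proof (induction arbitrary: y' rule: eval.induct)
  case (ev_comp g x y f z)
  then show ?case by (metis evC)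
next
  case (ev_pair f x y g z)
  then show ?case by (metis evP)
next
  case (ev_rec0 f p y g)
  from ev_rec0.prems show ?case
    by (rule evR) (use ev_rec0.IH in auto)
next
  case (ev_recS f g p n y z)
  from ev_recS.prems show ?case
    by (rule evR) (use ev_recS.IH in auto)
next
  case (ev_mu f p n)
  from ev_mu.prems obtain n' where e: "y' = n'" "eval D f (pe p n') 0"
     "\<forall>m<n'. \<exists>y. y \<noteq> 0 \<and> eval D f (pe p m) y" by (rule evM) auto
  show ?case
  proof (rule linorder_cases[of n n'])
    assume "n < n'" then show ?thesis using e ev_mu by force
  next
    assume "n' < n" then show ?thesis using e ev_mu by force
  qed (use e in auto)
qed (auto elim: evZ evS evF evSn evO)

definition computes :: "nat set \<Rightarrow> recf \<Rightarrow> (nat \<Rightarrow> nat) \<Rightarrow> bool" where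
  "computes D t F \<longleftrightarrow> (\<forall>x. eval D t x (F x))"

lemma computes_value: "computes D t F \<Longrightarrow> value_of D t x = F x"
  unfolding computes_def value_of_def by (blast intro: the_equality eval_det)

lemma total_computes: "(\<forall>x. converges D t x) \<Longrightarrow> computes D t (value_of D t)"
  unfolding computes_def converges_def value_of_def by (metis eval_det theI)
lemma computes_eq: "computes D t F \<Longrightarrow> (\<And>x. F x = G x) \<Longrightarrow> computes D t G"
  unfolding computes_def by metis

definition IdT where "IdT = PairF FstF SndF"
definition constT :: "nat \<Rightarrow> recf" where "constT n = (CompF SucF ^^ n) ZeroF"

lemma cZero: "computes D ZeroF (\<lambda>x. 0)" unfolding computes_def by (auto intro: eval.intros)
lemma cSuc: "computes D SucF (\<lambda>x. Suc x)" unfolding computes_def by (auto intro: eval.intros)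
lemma cFst: "computes D FstF (\<lambda>x. p1 x)" unfolding computes_def by (auto intro: eval.intros)
lemma cSnd: "computes D SndF (\<lambda>x. p2 x)" unfolding computes_def by (auto intro: eval.intros)
lemma cComp: "computes D f F \<Longrightarrow> computes D g G \<Longrightarrow> computes D (CompF f g) (\<lambda>x. F (G x))"
  unfolding computes_def by (auto intro: eval.intros)
lemma cPair: "computes D f F \<Longrightarrow> computes D g G \<Longrightarrow> computes D (PairF f g) (\<lambda>x. pe (F x) (G x))"
  unfolding computes_def by (auto intro: eval.intros)
lemma cRec: assumes "computes D f F" "computes D g G"
  shows "computes D (RecF f g) (\<lambda>x. rec_nat (F (p1 x)) (\<lambda>n y. G (pe (p1 x) (pe n y))) (p2 x))"
proof -
  have "eval D (RecF f g) (pe p n) (rec_nat (F p) (\<lambda>n y. G (pe p (pe n y))) n)" for p n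
    using assms unfolding computes_def by (induction n) (auto intro: eval.intros)
  then show ?thesis unfolding computes_def by (metis pe_p)
qed
lemma cId: "computes D IdT (\<lambda>x. x)"
  unfolding IdT_def by (rule computes_eq, rule cPair[OF cFst cSnd]) (simp add: pe_p)
lemma cConst: "computes D (constT n) (\<lambda>x. n)"
  unfolding constT_def by (induction n) (auto intro: cZero computes_eq[OF cComp[OF cSuc]])

lemmas cI = cZero cSuc cFst cSnd cComp cPair cRec cId cConst

definition AddT where "AddT = RecF IdT (CompF SucF (CompF SndF SndF))"
lemma cAdd: "computes D AddT (\<lambda>x. p1 x + p2 x)"
proof -
  have r: "rec_nat a (\<lambda>n y. Suc y) b = a + b" for a b :: nat by (induction b) auto
  show ?thesis unfolding AddT_def by (rule computes_eq, (rule cI)+) (simp add: r)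
qed
definition C2 where "C2 h a b = CompF h (PairF a b)"
lemma cC2: "computes D h H \<Longrightarrow> computes D a A \<Longrightarrow> computes D b B \<Longrightarrow>
   computes D (C2 h a b) (\<lambda>x. H (pe (A x) (B x)))"
  unfolding C2_def by (rule cComp, assumption, rule cPair)

lemmas cI2 = cI cAdd cC2

definition PredT where "PredT = CompF (RecF ZeroF (CompF FstF SndF)) (PairF ZeroF IdT)"
lemma cPred: "computes D PredT (\<lambda>x. x - 1)"
proof -
  have r: "rec_nat 0 (\<lambda>n y. n) b = b - 1" for b :: nat by (induction b) auto
  show ?thesis unfolding PredT_def by (rule computes_eq, (rule cI2)+) (simp add: r)
qed
definition SubT where "SubT = RecF IdT (CompF PredT (CompF SndF SndF))"
lemma cSub: "computes D SubT (\<lambda>x. p1 x - p2 x)"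
proof -
  have r: "rec_nat a (\<lambda>n y. y - Suc 0) b = a - b" for a b :: nat by (induction b) auto
  show ?thesis unfolding SubT_def by (rule computes_eq, (rule cI2 cPred)+) (simp add: r)
qed
definition MulT where "MulT = RecF ZeroF (C2 AddT (CompF SndF SndF) FstF)"
lemma cMul: "computes D MulT (\<lambda>x. p1 x * p2 x)"
proof -
  have r: "rec_nat 0 (\<lambda>n y. y + a) b = a * b" for a b :: nat by (induction b) auto
  show ?thesis unfolding MulT_def by (rule computes_eq, (rule cI2)+) (simp add: r)
qed
definition CondT where "CondT = RecF FstF (CompF SndF FstF)"
lemma cCond: "computes D CondT (\<lambda>x. if p2 x = 0 then p1 (p1 x) else p2 (p1 x))"
  unfolding CondT_def by (rule computes_eq, (rule cI2)+) (auto simp: gr0_conv_Suc)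
definition IfZ where "IfZ c a b = C2 CondT (PairF a b) c"
lemma cIfZ: "computes D c Cf \<Longrightarrow> computes D a A \<Longrightarrow> computes D b B \<Longrightarrow>
   computes D (IfZ c a b) (\<lambda>x. if Cf x = 0 then A x else B x)"
  unfolding IfZ_def by (rule computes_eq, (rule cI2 cCond | assumption)+) simp

definition Mod2T where "Mod2T = CompF (RecF ZeroF (C2 SubT (constT 1) (CompF SndF SndF))) (PairF ZeroF IdT)"
lemma cMod2: "computes D Mod2T (\<lambda>x. x mod 2)"
proof -
  have r: "rec_nat 0 (\<lambda>n y. Suc 0 - y) b = b mod 2" for b :: nat by (induction b) (auto simp: mod_Suc)
  show ?thesis unfolding Mod2T_def by (rule computes_eq, (rule cI2 cSub)+) (simp add: r)
qed
definition Div2T where "Div2T = CompF (RecF ZeroF (C2 AddT (CompF SndF SndF) (CompF Mod2T (CompF FstF SndF)))) (PairF ZeroF IdT)"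
lemma cDiv2: "computes D Div2T (\<lambda>x. x div 2)"
proof -
  have r: "rec_nat 0 (\<lambda>n y. y + n mod 2) b = b div 2" for b :: nat by (induction b) (auto simp: div2_Suc_Suc, presburger)
  show ?thesis unfolding Div2T_def by (rule computes_eq, (rule cI2 cMod2)+) (simp add: r)
qed
definition TriT where "TriT = CompF (RecF ZeroF (C2 AddT (CompF SndF SndF) (CompF SucF (CompF FstF SndF)))) (PairF ZeroF IdT)"
lemma cTri: "computes D TriT (\<lambda>x. triangle x)"
proof -
  have r: "rec_nat 0 (\<lambda>n y. Suc (y + n)) b = triangle b" for b :: nat by (induction b) auto
  show ?thesis unfolding TriT_def by (rule computes_eq, (rule cI2)+) (simp add: r)
qed
definition PeT where "PeT = C2 AddT (CompF TriT AddT) FstF"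
lemma cPe: "computes D PeT (\<lambda>x. pe (p1 x) (p2 x))"
  unfolding PeT_def apply (rule computes_eq, (rule cI2 cTri)+)
  apply (simp only: prod_encode_inverse fst_conv snd_conv) by (simp add: prod_encode_def split: prod.split)
lemma cPe': "computes D PeT (\<lambda>x. x)"
  by (rule computes_eq[OF cPe]) (simp add: pe_p)

definition TailT where "TailT = CompF SndF PredT"
lemma cTail: "computes D TailT (\<lambda>x. p2 (x - 1))"
  unfolding TailT_def by (rule computes_eq, (rule cI2 cPred)+) simp
definition HeadT where "HeadT = CompF FstF PredT"
lemma cHead: "computes D HeadT (\<lambda>x. p1 (x - 1))"
  unfolding HeadT_def by (rule computes_eq, (rule cI2 cPred)+) simp
definition tl_c where "tl_c x = p2 (x - 1)"
definition TailNT where "TailNT = RecF IdT (CompF TailT (CompF SndF SndF))"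
lemma cTailN: "computes D TailNT (\<lambda>x. (tl_c ^^ p2 x) (p1 x))"
proof -
  have r: "rec_nat a (\<lambda>n y. p2 (y - Suc 0)) b = (tl_c ^^ b) a" for a b :: nat by (induction b) (auto simp: tl_c_def)
  show ?thesis unfolding TailNT_def by (rule computes_eq, (rule cI2 cTail)+) (simp add: r)
qed

lemmas cI3 = cI2 cSub cMul cIfZ cMod2 cDiv2 cPe cHead cTail cTailN


declare recf_of_nat.simps[simp del]

primrec enc :: "recf \<Rightarrow> nat" where
  "enc ZeroF = 0" | "enc SucF = 1" | "enc FstF = 2" | "enc SndF = 3" | "enc OracleF = 4"
| "enc (CompF f g) = 9 * pe (enc f) (enc g) + 5"
| "enc (PairF f g) = 9 * pe (enc f) (enc g) + 6"
| "enc (RecF f g) = 9 * pe (enc f) (enc g) + 7"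
| "enc (MuF f) = 9 * enc f + 8"

lemma rn_enc: "recf_of_nat (enc t) = t"
  by (induction t; subst recf_of_nat.simps; simp)

definition cmpc where "cmpc a b = 9 * pe a b + 5"
definition prc where "prc a b = 9 * pe a b + 6"
lemma rn_cmpc: "recf_of_nat (cmpc a b) = CompF (recf_of_nat a) (recf_of_nat b)"
  unfolding cmpc_def by (subst recf_of_nat.simps) simp
lemma rn_prc: "recf_of_nat (prc a b) = PairF (recf_of_nat a) (recf_of_nat b)"
  unfolding prc_def by (subst recf_of_nat.simps) simp

definition cc where "cc v = ((\<lambda>c. cmpc 1 c) ^^ v) 0"
lemma rn_cc: "recf_of_nat (cc v) = constT v"
proof (induction v)
  case 0 then show ?case unfolding cc_def constT_def by (subst recf_of_nat.simps) simp
next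
  case (Suc v)
  have "recf_of_nat 1 = SucF" by (subst recf_of_nat.simps) simp
  then show ?case using Suc unfolding cc_def constT_def by (simp add: rn_cmpc)
qed

definition CmpcT where "CmpcT = C2 AddT (C2 MulT (constT 9) PeT) (constT 5)"
lemma cCmpc: "computes D CmpcT (\<lambda>x. cmpc (p1 x) (p2 x))"
  unfolding CmpcT_def cmpc_def by (rule computes_eq, (rule cI3)+) simp
definition PrcT where "PrcT = C2 AddT (C2 MulT (constT 9) PeT) (constT 6)"
lemma cPrc: "computes D PrcT (\<lambda>x. prc (p1 x) (p2 x))"
  unfolding PrcT_def prc_def by (rule computes_eq, (rule cI3)+) simp
definition CcT where "CcT = CompF (RecF ZeroF (C2 CmpcT (constT 1) (CompF SndF SndF))) (PairF ZeroF IdT)"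
lemma cCc: "computes D CcT cc"
proof -
  have r: "rec_nat 0 (\<lambda>n. cmpc (Suc 0)) b = cc b" for b by (induction b) (auto simp: cc_def)
  show ?thesis unfolding CcT_def by (rule computes_eq, (rule cI3 cCmpc)+) (simp add: r)
qed

definition QT where "QT = IfZ FstF (C2 PeT ZeroF (CompF Div2T SndF))
   (C2 PeT FstF (C2 PeT (CompF Div2T (CompF FstF SndF)) (CompF SndF SndF)))"
definition Qf where "Qf x = (if p1 x = 0 then pe 0 (p2 x div 2) else pe (p1 x) (pe (p1 (p2 x) div 2) (p2 (p2 x))))"
lemma cQ: "computes D QT Qf"
  unfolding QT_def Qf_def by (rule computes_eq, (rule cI3)+) simp

definition WT where "WT = (let X = CompF SndF SndF; c = CompF FstF X; r = CompF SndF X; k = CompF FstF r;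
    Y = FstF; V = CompF FstF SndF in
   IfZ c (IfZ (CompF Mod2T r) Y (IfZ (C2 TailNT V (CompF Div2T r)) ZeroF (constT 3)))
         (IfZ (CompF Mod2T k) Y (CompF HeadT (C2 TailNT V (CompF Div2T k)))))"
definition Wf where "Wf z = (let y = p1 z; v = p1 (p2 z); x = p2 (p2 z); c = p1 x; r = p2 x; k = p1 r in
  if c = 0 then (if r mod 2 = 0 then y else if (tl_c ^^ (r div 2)) v = 0 then 0 else 3)
  else (if k mod 2 = 0 then y else p1 ((tl_c ^^ (k div 2)) v - 1)))"
lemma cW: "computes D WT Wf"
  unfolding WT_def Wf_def Let_def by (rule computes_eq, (rule cI3)+) simp

definition EXP where "EXP G V = CompF WT (PairF (CompF G QT) (PairF V IdT))"
lemma cEXP: "computes D G g \<Longrightarrow> computes D (EXP G (constT v)) (\<lambda>x. Wf (pe (g (Qf x)) (pe v x)))"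
  unfolding EXP_def by (rule computes_eq, (rule cI3 cW cQ | assumption)+) simp

definition Kf where "Kf i v = cmpc (enc WT) (prc (cmpc i (enc QT)) (prc (cc v) (enc IdT)))"
lemma rn_K: "recf_of_nat (Kf i v) = EXP (recf_of_nat i) (constT v)"
  unfolding Kf_def EXP_def by (simp add: rn_cmpc rn_prc rn_enc rn_cc)
definition KT where "KT = C2 CmpcT (constT (enc WT)) (C2 PrcT (C2 CmpcT FstF (constT (enc QT)))
     (C2 PrcT (CompF CcT SndF) (constT (enc IdT))))"
lemma cK: "computes D KT (\<lambda>x. Kf (p1 x) (p2 x))"
  unfolding KT_def Kf_def by (rule computes_eq, (rule cI3 cCmpc cPrc cCc)+) simp


primrec lc :: "nat list \<Rightarrow> nat" where
  "lc [] = 0" | "lc (x # xs) = Suc (pe x (lc xs))"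

lemma pd0: "prod_decode 0 = (0, 0)"
proof -
  have "pe 0 0 = 0" by (simp add: prod_encode_def)
  then show ?thesis by (metis prod_encode_inverse)
qed
lemma pd2: "prod_decode 2 = (1, 0)"
proof -
  have "pe 1 0 = 2" by (simp add: prod_encode_def numeral_2_eq_2)
  then show ?thesis by (metis prod_encode_inverse)
qed

lemma tl_c0: "tl_c 0 = 0" by (simp add: tl_c_def pd0)
lemma tl_c_cons: "tl_c (lc (x # xs)) = lc xs" by (simp add: tl_c_def)
lemma tl_c_cons': "tl_c (Suc (pe x y)) = y" by (simp add: tl_c_def)
lemma lc_drop_nz: "l < length as \<Longrightarrow> lc (drop l as) \<noteq> 0"
  by (simp add: Cons_nth_drop_Suc[symmetric])
lemma tlN0: "(tl_c ^^ l) 0 = 0" by (induction l) (auto simp: tl_c0)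

lemma tlN: "(tl_c ^^ l) (lc as) = (if l < length as then lc (drop l as) else 0)"
proof (induction l arbitrary: as)
  case 0 then show ?case by (cases as) auto
next
  case (Suc l)
  show ?case
  proof (cases as)
    case Nil then show ?thesis by (simp add: funpow_Suc_right tl_c0 tlN0 del: funpow.simps)
  next
    case (Cons a as')
    then show ?thesis using Suc[of as'] by (simp add: funpow_Suc_right tl_c_cons' del: funpow.simps)
  qed
qed

lemma hd_drop: "l < length as \<Longrightarrow> p1 (lc (drop l as) - Suc 0) = as ! l"
  by (simp add: Cons_nth_drop_Suc[symmetric])

definition expand :: "struc \<Rightarrow> nat list \<Rightarrow> struc" where
 "expand A as = \<lparr>sig = (\<lambda>k. if even k then sig A (k div 2) else if k div 2 < length as then Some (False, 0) else None),
   rel = (\<lambda>k xs. even k \<and> rel A (k div 2) xs),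
   fn = (\<lambda>k xs. if even k then fn A (k div 2) xs else if k div 2 < length as \<and> xs = [] then as ! (k div 2) else 0)\<rparr>"

lemma struct_expand:
  "structure_of (\<lambda>x. Wf (pe (g (Qf x)) (pe (lc as) x))) = expand (structure_of g) as"
proof -
  have s: "sig_decode (Wf (pe (g (Qf (pe 0 k))) (pe (lc as) (pe 0 k)))) =
     (if even k then sig_decode (g (pe 0 (k div 2))) else if k div 2 < length as then Some (False, 0) else None)" for k
    by (auto simp: Wf_def Qf_def tlN sig_decode_def pd2 even_iff_mod_2_eq_zero lc_drop_nz)
  show ?thesis
    unfolding structure_of_def expand_def Let_def s
    apply (simp add: fun_eq_iff)
    apply (auto simp: Wf_def Qf_def tlN hd_drop even_iff_mod_2_eq_zero lc_drop_nz)
    done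
qed


lemma Mlist_K:
  assumes "Mlist i = Some A"
  shows "Mlist (Kf i (lc as)) = Some (expand A as)"
proof -
  let ?g = "value_of {} (recf_of_nat i)"
  have tot: "\<forall>x. converges {} (recf_of_nat i) x" and A: "A = structure_of ?g"
    using assms unfolding Mlist_def by (auto split: if_splits)
  have c: "computes {} (recf_of_nat (Kf i (lc as))) (\<lambda>x. Wf (pe (?g (Qf x)) (pe (lc as) x)))"
    unfolding rn_K by (rule cEXP[OF total_computes[OF tot]])
  then have "\<forall>x. converges {} (recf_of_nat (Kf i (lc as))) x"
    unfolding computes_def converges_def by blast
  moreover have "value_of {} (recf_of_nat (Kf i (lc as))) = (\<lambda>x. Wf (pe (?g (Qf x)) (pe (lc as) x)))"
    using computes_value[OF c] by blast
  ultimately show ?thesis unfolding Mlist_def by (simp add: struct_expand A)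
qed

lemma iso_inv:
  assumes "is_iso F A B" shows "is_iso (inv F) B A"
proof -
  have b: "bij F" and sg: "sig A = sig B"
    and r: "\<And>k xs. sig A k = Some (True, length xs) \<Longrightarrow> rel A k xs = rel B k (map F xs)"
    and f: "\<And>k xs. sig A k = Some (False, length xs) \<Longrightarrow> F (fn A k xs) = fn B k (map F xs)"
    using assms unfolding is_iso_def by auto
  have FI: "F (inv F y) = y" for y using b by (simp add: bij_is_surj surj_f_inv_f)
  have IF: "inv F (F y) = y" for y using b by (simp add: bij_is_inj)
  have mm: "map F (map (inv F) xs) = xs" for xs by (induction xs) (auto simp: FI)
  have mm': "map (F \<circ> inv F) xs = xs" for xs using mm[of xs] by simp
  show ?thesis unfolding is_iso_def
  proof (intro conjI allI impI)
    show "sig B = sig A" using sg by simp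
    show "bij (inv F)" using b by (simp add: bij_imp_bij_inv)
    fix k and xs :: "nat list"
    { assume "sig B k = Some (True, length xs)"
      then show "rel B k xs = rel A k (map (inv F) xs)" using r[of k "map (inv F) xs"] sg by (simp add: mm mm') }
    { assume "sig B k = Some (False, length xs)"
      then have "F (fn A k (map (inv F) xs)) = fn B k xs" using f[of k "map (inv F) xs"] sg by (simp add: mm mm')
      then show "inv F (fn B k xs) = fn A k (map (inv F) xs)" by (metis IF) }
  qed
qed

lemma inv_left: "is_iso F A B \<Longrightarrow> inv F (F x) = x"
  unfolding is_iso_def by (simp add: bij_is_inj)
lemma inv_right: "is_iso F A B \<Longrightarrow> F (inv F x) = x"
  unfolding is_iso_def by (simp add: bij_is_surj surj_f_inv_f)

lemma iso_expand: "is_iso F (expand A as) (expand B bs) \<longleftrightarrow> is_iso F A B \<and> map F as = bs"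
proof
  assume h: "is_iso F (expand A as) (expand B bs)"
  have sg: "\<And>k. sig (expand A as) k = sig (expand B bs) k" using h unfolding is_iso_def by simp
  have sA: "sig A k = sig B k" for k using sg[of "2*k"] by (simp add: expand_def)
  have len: "length as = length bs"
  proof (rule ccontr)
    assume "length as \<noteq> length bs"
    then have "(min (length as) (length bs) < length as) \<noteq> (min (length as) (length bs) < length bs)" by auto
    then show False using sg[of "2 * min (length as) (length bs) + 1"] by (auto simp: expand_def split: if_splits)
  qed
  have mp: "map F as = bs"
  proof (rule nth_equalityI)
    show "length (map F as) = length bs" using len by simp
    fix l assume l: "l < length (map F as)"
    have "sig (expand A as) (2*l+1) = Some (False, length ([]::nat list))" using l by (simp add: expand_def)
    then have "F (fn (expand A as) (2*l+1) []) = fn (expand B bs) (2*l+1) (map F [])"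
      using h unfolding is_iso_def by blast
    then show "map F as ! l = bs ! l" using l len by (simp add: expand_def)
  qed
  have "is_iso F A B" unfolding is_iso_def
  proof (intro conjI allI impI)
    show "sig A = sig B" using sA by auto
    show "bij F" using h unfolding is_iso_def by simp
    fix k and xs :: "nat list"
    { assume "sig A k = Some (True, length xs)"
      then have "sig (expand A as) (2*k) = Some (True, length xs)" by (simp add: expand_def)
      then have "rel (expand A as) (2*k) xs = rel (expand B bs) (2*k) (map F xs)" using h unfolding is_iso_def by blast
      then show "rel A k xs = rel B k (map F xs)" by (simp add: expand_def) }
    { assume "sig A k = Some (False, length xs)"
      then have "sig (expand A as) (2*k) = Some (False, length xs)" by (simp add: expand_def)
      then have "F (fn (expand A as) (2*k) xs) = fn (expand B bs) (2*k) (map F xs)" using h unfolding is_iso_def by blast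
      then show "F (fn A k xs) = fn B k (map F xs)" by (simp add: expand_def) }
  qed
  then show "is_iso F A B \<and> map F as = bs" using mp by simp
next
  assume h: "is_iso F A B \<and> map F as = bs"
  then have len: "length as = length bs" by auto
  have nth: "l < length as \<Longrightarrow> F (as ! l) = bs ! l" for l using h by auto
  show "is_iso F (expand A as) (expand B bs)" unfolding is_iso_def
  proof (intro conjI allI impI)
    show "sig (expand A as) = sig (expand B bs)" using h len unfolding is_iso_def expand_def by auto
    show "bij F" using h unfolding is_iso_def by simp
    fix k and xs :: "nat list"
    { assume a: "sig (expand A as) k = Some (True, length xs)"
      then have "even k" by (auto simp: expand_def split: if_splits)
      then show "rel (expand A as) k xs = rel (expand B bs) k (map F xs)"
        using a h unfolding is_iso_def expand_def by auto }
    { assume a: "sig (expand A as) k = Some (False, length xs)"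
      show "F (fn (expand A as) k xs) = fn (expand B bs) k (map F xs)"
      proof (cases "even k")
        case True then show ?thesis using a h unfolding is_iso_def expand_def by auto
      next
        case False
        then have "k div 2 < length as" "xs = []" using a by (auto simp: expand_def split: if_splits)
        then show ?thesis using False nth len by (simp add: expand_def)
      qed }
  qed
qed


primrec stL :: "(nat \<Rightarrow> nat) \<Rightarrow> nat \<Rightarrow> nat \<Rightarrow> nat \<Rightarrow> nat list \<times> nat list" where
  "stL \<phi> i j 0 = ([], [])"
| "stL \<phi> i j (Suc t) = (let as = fst (stL \<phi> i j t); bs = snd (stL \<phi> i j t);
     b = \<phi> (code3 (Kf i (lc as)) (Kf j (lc bs)) t);
     x = \<phi> (code3 (Kf j (lc (b # bs))) (Kf i (lc (t # as))) t) in (x # t # as, t # b # bs))"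

definition hf where "hf \<phi> i j t = snd (stL \<phi> i j (Suc t)) ! 1"
definition hinvf where "hinvf \<phi> i j t = fst (stL \<phi> i j (Suc t)) ! 0"

lemma stL_len: "length (fst (stL \<phi> i j s)) = 2 * s \<and> length (snd (stL \<phi> i j s)) = 2 * s"
  by (induction s) (auto simp: Let_def)

lemma stL_drop: "t \<le> s \<Longrightarrow> fst (stL \<phi> i j t) = drop (2 * (s - t)) (fst (stL \<phi> i j s)) \<and>
   snd (stL \<phi> i j t) = drop (2 * (s - t)) (snd (stL \<phi> i j s))"
proof (induction s)
  case 0 then show ?case by simp
next
  case (Suc s)
  show ?case
  proof (cases "t = Suc s")
    case False
    then have "t \<le> s" using Suc.prems by simp
    then have e: "Suc s - t = Suc (s - t)" by simp
    show ?thesis using Suc.IH[OF \<open>t \<le> s\<close>] unfolding e by (simp add: Let_def)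
  qed simp
qed

definition isoP :: "(nat \<Rightarrow> nat) \<Rightarrow> bool" where
  "isoP \<phi> \<longleftrightarrow> (\<forall>i j. iso_indices i j \<longrightarrow> is_iso (\<lambda>n. \<phi> (code3 i j n)) (structure_at i) (structure_at j))"

lemma bf_inv:
  assumes P: "isoP \<phi>" and Ai: "Mlist i = Some A" and Bj: "Mlist j = Some B" and AB: "isomorphic A B"
  shows "\<exists>F. is_iso F A B \<and> map F (fst (stL \<phi> i j t)) = snd (stL \<phi> i j t)"
proof (induction t)
  case 0 then show ?case using AB unfolding isomorphic_def by simp
next
  case (Suc t)
  define as where "as = fst (stL \<phi> i j t)"
  define bs where "bs = snd (stL \<phi> i j t)"
  obtain F0 where F0: "is_iso F0 A B" "map F0 as = bs" using Suc unfolding as_def bs_def by blast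
  define F1 where "F1 = (\<lambda>n. \<phi> (code3 (Kf i (lc as)) (Kf j (lc bs)) n))"
  have ii1: "iso_indices (Kf i (lc as)) (Kf j (lc bs))"
    unfolding iso_indices_def isomorphic_def using Mlist_K[OF Ai] Mlist_K[OF Bj] iso_expand F0 by blast
  have "is_iso F1 (expand A as) (expand B bs)"
    using P[unfolded isoP_def, rule_format, OF ii1] by (simp add: Mlist_K[OF Ai] Mlist_K[OF Bj] structure_at_def F1_def)
  then have F1: "is_iso F1 A B" "map F1 as = bs" using iso_expand by auto
  define b where "b = F1 t"
  define G where "G = (\<lambda>n. \<phi> (code3 (Kf j (lc (b # bs))) (Kf i (lc (t # as))) n))"
  have mi: "map (inv F1) (b # bs) = t # as"
  proof -
    have "inv F1 \<circ> F1 = id" using inv_left[OF F1(1)] by (auto simp: fun_eq_iff)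
    then have "map (inv F1) (map F1 as) = as" by (simp only: map_map list.map_id)
    then show ?thesis using F1 unfolding b_def by (simp add: inv_left[OF F1(1)])
  qed
  have "is_iso (inv F1) (expand B (b # bs)) (expand A (t # as))"
    using iso_expand[of "inv F1" B "b # bs" A "t # as"] iso_inv[OF F1(1)] mi by simp
  then have ii2: "iso_indices (Kf j (lc (b # bs))) (Kf i (lc (t # as)))"
    unfolding iso_indices_def isomorphic_def using Mlist_K[OF Ai] Mlist_K[OF Bj] by blast
  have "is_iso G (expand B (b # bs)) (expand A (t # as))"
    using P[unfolded isoP_def, rule_format, OF ii2] unfolding structure_at_def Mlist_K[OF Ai] Mlist_K[OF Bj] G_def option.sel .
  then have G: "is_iso G B A" "map G (b # bs) = t # as" using iso_expand by auto
  have "map (inv G) (G t # t # as) = t # b # bs"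
  proof -
    have "map (inv G) (map G (b # bs)) = b # bs" by (simp only: map_map inv_left[OF G(1)] comp_def list.map_ident)
    then have m2: "map (inv G) (t # as) = b # bs" unfolding G(2) .
    show ?thesis by (subst list.map(2)) (simp only: m2 inv_left[OF G(1)])
  qed
  moreover have "stL \<phi> i j (Suc t) = (G t # t # as, t # b # bs)"
    unfolding as_def bs_def G_def b_def F1_def by (simp add: Let_def)
  ultimately show ?case using iso_inv[OF G(1)] by auto
qed

lemma sum_list_ge: "x \<in> set xs \<Longrightarrow> x \<le> sum_list (xs :: nat list)"
  by (induction xs) auto

lemma KL:
  assumes P: "isoP \<phi>" and Ai: "Mlist i = Some A" and Bj: "Mlist j = Some B" and AB: "isomorphic A B"
  shows "\<exists>F. is_iso F A B \<and> (\<forall>t<N. F t = hf \<phi> i j t \<and> F (hinvf \<phi> i j t) = t)"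
proof -
  obtain F where F: "is_iso F A B" "map F (fst (stL \<phi> i j N)) = snd (stL \<phi> i j N)"
    using bf_inv[OF assms] by blast
  have "F t = hf \<phi> i j t \<and> F (hinvf \<phi> i j t) = t" if t: "t < N" for t
  proof -
    have "Suc t \<le> N" using t by simp
    from stL_drop[OF this, of \<phi> i j] F(2)
    have "map F (fst (stL \<phi> i j (Suc t))) = snd (stL \<phi> i j (Suc t))" by (simp add: drop_map[symmetric])
    then show ?thesis unfolding hf_def hinvf_def by (simp add: Let_def)
  qed
  then show ?thesis using F(1) by blast
qed

lemma h_iso:
  assumes P: "isoP \<phi>" and Ai: "Mlist i = Some A" and Bj: "Mlist j = Some B" and AB: "isomorphic A B"
  shows "is_iso (hf \<phi> i j) A B \<and> hinvf \<phi> i j \<circ> hf \<phi> i j = id \<and> hf \<phi> i j \<circ> hinvf \<phi> i j = id"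
proof -
  note K = KL[OF assms]
  have r: "hf \<phi> i j (hinvf \<phi> i j y) = y" for y
  proof -
    obtain F where "is_iso F A B" "\<forall>t<Suc (y + hinvf \<phi> i j y). F t = hf \<phi> i j t \<and> F (hinvf \<phi> i j t) = t"
      using K by blast
    then show ?thesis by (metis add.commute less_Suc_eq_le le_add1 le_add2)
  qed
  have l: "hinvf \<phi> i j (hf \<phi> i j x) = x" for x
  proof -
    obtain F where F: "is_iso F A B" "\<forall>t<Suc (x + hf \<phi> i j x). F t = hf \<phi> i j t \<and> F (hinvf \<phi> i j t) = t"
      using K by blast
    then have "F x = hf \<phi> i j x" "F (hinvf \<phi> i j (hf \<phi> i j x)) = hf \<phi> i j x" by auto
    then show ?thesis using inv_left[OF F(1)] by metis
  qed
  have c1: "hinvf \<phi> i j \<circ> hf \<phi> i j = id" and c2: "hf \<phi> i j \<circ> hinvf \<phi> i j = id"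
    using l r by (auto simp: fun_eq_iff)
  have "is_iso (hf \<phi> i j) A B" unfolding is_iso_def
  proof (intro conjI allI impI)
    obtain F where "is_iso F A B" using K by blast
    then show "sig A = sig B" unfolding is_iso_def by simp
    show "bij (hf \<phi> i j)" using o_bij[OF c1 c2] .
    fix k and xs :: "nat list"
    obtain F where F: "is_iso F A B" "\<forall>t<Suc (sum_list xs + fn A k xs). F t = hf \<phi> i j t \<and> F (hinvf \<phi> i j t) = t"
      using K by blast
    have m: "map F xs = map (hf \<phi> i j) xs"
    proof (intro map_cong refl)
      fix x assume "x \<in> set xs"
      then have "x < Suc (sum_list xs + fn A k xs)" using sum_list_ge[of x xs] by simp
      then show "F x = hf \<phi> i j x" using F(2) by blast
    qed
    have fv: "F (fn A k xs) = hf \<phi> i j (fn A k xs)" using F(2) by auto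
    { assume "sig A k = Some (True, length xs)"
      then show "rel A k xs = rel B k (map (hf \<phi> i j) xs)" using F(1) m unfolding is_iso_def by metis }
    { assume "sig A k = Some (False, length xs)"
      then show "hf \<phi> i j (fn A k xs) = fn B k (map (hf \<phi> i j) xs)" using F(1) m fv unfolding is_iso_def by metis }
  qed
  then show ?thesis using c1 c2 by simp
qed


definition stepf where "stepf \<phi> i j t s = (let a = p1 s; b = p2 s; bv = \<phi> (code3 (Kf i a) (Kf j b) t);
   x = \<phi> (code3 (Kf j (Suc (pe bv b))) (Kf i (Suc (pe t a))) t) in
   pe (Suc (pe x (Suc (pe t a)))) (Suc (pe t (Suc (pe bv b)))))"

definition ConsT where "ConsT = CompF SucF PeT"
lemma cCons: "computes D ConsT (\<lambda>x. Suc (pe (p1 x) (p2 x)))"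
  unfolding ConsT_def by (rule computes_eq, (rule cI3)+) simp
definition Code3T where "Code3T a b c = C2 PeT a (C2 PeT b c)"
lemma cCode3: "computes D a A \<Longrightarrow> computes D b B \<Longrightarrow> computes D c Cc \<Longrightarrow>
  computes D (Code3T a b c) (\<lambda>x. code3 (A x) (B x) (Cc x))"
  unfolding Code3T_def code3_def by (rule computes_eq, (rule cI3 | assumption)+) simp

definition StpT where "StpT \<Phi> = (let I = CompF FstF FstF; J = CompF SndF FstF; T = CompF FstF SndF;
   S = CompF SndF SndF; A = CompF FstF S; B = CompF SndF S;
   A1 = C2 ConsT T A; Bv = CompF \<Phi> (Code3T (C2 KT I A) (C2 KT J B) T); B1 = C2 ConsT Bv B;
   X = CompF \<Phi> (Code3T (C2 KT J B1) (C2 KT I A1) T) in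
   C2 PeT (C2 ConsT X A1) (C2 ConsT T B1))"
lemma cStp: "computes D \<Phi> \<phi> \<Longrightarrow>
   computes D (StpT \<Phi>) (\<lambda>z. stepf \<phi> (p1 (p1 z)) (p2 (p1 z)) (p1 (p2 z)) (p2 (p2 z)))"
  unfolding StpT_def Let_def by (rule computes_eq, (rule cI3 cCons cCode3 cK | assumption)+) (simp add: stepf_def Let_def)

lemma stage: "rec_nat 0 (\<lambda>n y. stepf \<phi> i j n y) t = pe (lc (fst (stL \<phi> i j t))) (lc (snd (stL \<phi> i j t)))"
proof (induction t)
  case 0 then show ?case by (simp add: prod_encode_def)
next
  case (Suc t) then show ?case by (simp add: stepf_def Let_def)
qed

definition StT where "StT \<Phi> = RecF ZeroF (StpT \<Phi>)"
lemma cSt: "computes D \<Phi> \<phi> \<Longrightarrow>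
  computes D (StT \<Phi>) (\<lambda>x. pe (lc (fst (stL \<phi> (p1 (p1 x)) (p2 (p1 x)) (p2 x)))) (lc (snd (stL \<phi> (p1 (p1 x)) (p2 (p1 x)) (p2 x)))))"
  unfolding StT_def by (rule computes_eq, (rule cI3 cStp | assumption)+) (simp add: stage)

definition StIn where "StIn = C2 PeT (C2 PeT FstF (CompF FstF SndF)) (CompF SucF (CompF SndF SndF))"
definition HT where "HT \<Phi> = CompF HeadT (CompF TailT (CompF SndF (CompF (StT \<Phi>) StIn)))"
definition HinvT where "HinvT \<Phi> = CompF HeadT (CompF FstF (CompF (StT \<Phi>) StIn))"
lemma cH: "computes D \<Phi> \<phi> \<Longrightarrow> computes D (HT \<Phi>) (\<lambda>z. hf \<phi> (p1 z) (p1 (p2 z)) (p2 (p2 z)))"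
  unfolding HT_def StIn_def by (rule computes_eq, (rule cI3 cSt | assumption)+) (simp add: hf_def Let_def)
lemma cHinv: "computes D \<Phi> \<phi> \<Longrightarrow> computes D (HinvT \<Phi>) (\<lambda>z. hinvf \<phi> (p1 z) (p1 (p2 z)) (p2 (p2 z)))"
  unfolding HinvT_def StIn_def by (rule computes_eq, (rule cI3 cSt | assumption)+) (simp add: hinvf_def Let_def)

definition ThT where "ThT \<Phi> = (let i = FstF; j = CompF FstF SndF; n = CompF SndF SndF in
   IfZ (C2 AddT (C2 SubT i j) (C2 SubT j i)) n
     (IfZ (C2 SubT j i) (CompF (HinvT \<Phi>) (C2 PeT j (C2 PeT i n))) (HT \<Phi>)))"
definition thf where "thf \<phi> i j n = (if i = j then n else if j \<le> i then hinvf \<phi> j i n else hf \<phi> i j n)"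
lemma cTh: "computes D \<Phi> \<phi> \<Longrightarrow> computes D (ThT \<Phi>) (\<lambda>z. thf \<phi> (p1 z) (p1 (p2 z)) (p2 (p2 z)))"
  unfolding ThT_def Let_def by (rule computes_eq, (rule cI3 cH cHinv | assumption)+) (auto simp: thf_def)

lemma app3_c: "computes D T (\<lambda>z. f (p1 z) (p1 (p2 z)) (p2 (p2 z))) \<Longrightarrow> app3 D T i j n = f i j n"
  unfolding app3_def by (simp add: computes_value code3_def)
lemma total3_c: "computes D T F \<Longrightarrow> total3 D T"
  unfolding total3_def converges_def computes_def by blast

lemma iso_id: "is_iso id A A" unfolding is_iso_def by simp

lemma iso_indices_sym: "iso_indices i j \<Longrightarrow> iso_indices j i"
  unfolding iso_indices_def isomorphic_def using iso_inv by blast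

lemma main_aux:
  assumes "loq_high d"
  shows "\<exists>D\<in>d. \<exists>\<Phi>. computes D \<Phi> (value_of D \<Phi>) \<and> isoP (value_of D \<Phi>)"
proof -
  obtain D \<Phi> where D: "D \<in> d" "total3 D \<Phi>"
    "\<forall>i j. iso_indices i j \<longrightarrow> is_iso (app3 D \<Phi> i j) (structure_at i) (structure_at j)"
    using assms unfolding loq_high_def by blast
  have "converges D \<Phi> x" for x
    using D(2) unfolding total3_def code3_def by (metis pe_p)
  then have "computes D \<Phi> (value_of D \<Phi>)" by (simp add: total_computes)
  moreover have "isoP (value_of D \<Phi>)" using D(3) unfolding isoP_def app3_def by simp
  ultimately show ?thesis using D(1) by blast
qed

lemma h_iso':
  assumes P: "isoP \<phi>" and ij: "iso_indices i j"
  shows "is_iso (hf \<phi> i j) (structure_at i) (structure_at j) \<and> hinvf \<phi> i j \<circ> hf \<phi> i j = id \<and> hf \<phi> i j \<circ> hinvf \<phi> i j = id"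
  using ij h_iso[OF P] unfolding iso_indices_def structure_at_def by auto


theorem mainTheorem3:
  assumes "is_turing_degree d"
    and "loq_high d"
  shows "(\<exists>D\<in>d. \<exists>\<Phi> \<Psi>. total3 D \<Phi> \<and> total3 D \<Psi> \<and>
            (\<forall>i j. iso_indices i j \<longrightarrow>
               is_iso (app3 D \<Phi> i j) (structure_at i) (structure_at j) \<and>
               app3 D \<Psi> i j \<circ> app3 D \<Phi> i j = id \<and>
               app3 D \<Phi> i j \<circ> app3 D \<Psi> i j = id))
       \<and> (\<exists>D\<in>d. \<exists>\<Theta>. total3 D \<Theta> \<and>
            (\<forall>i j. iso_indices i j \<longrightarrow>
               is_iso (app3 D \<Theta> i j) (structure_at i) (structure_at j) \<and>
               app3 D \<Theta> j i \<circ> app3 D \<Theta> i j = id \<and>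
               app3 D \<Theta> i j \<circ> app3 D \<Theta> j i = id))"
proof -
  obtain D \<Phi> where D: "D \<in> d" and c: "computes D \<Phi> (value_of D \<Phi>)" and P: "isoP (value_of D \<Phi>)"
    using main_aux[OF assms(2)] by blast
  define \<phi> where "\<phi> = value_of D \<Phi>"
  note c = c[folded \<phi>_def] and P = P[folded \<phi>_def]
  have aH: "app3 D (HT \<Phi>) i j = hf \<phi> i j" for i j using app3_c[OF cH[OF c]] by (simp add: fun_eq_iff)
  have aHi: "app3 D (HinvT \<Phi>) i j = hinvf \<phi> i j" for i j using app3_c[OF cHinv[OF c]] by (simp add: fun_eq_iff)
  have aT: "app3 D (ThT \<Phi>) i j = thf \<phi> i j" for i j using app3_c[OF cTh[OF c]] by (simp add: fun_eq_iff)
  have part1: "\<exists>D\<in>d. \<exists>\<Phi> \<Psi>. total3 D \<Phi> \<and> total3 D \<Psi> \<and>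
            (\<forall>i j. iso_indices i j \<longrightarrow>
               is_iso (app3 D \<Phi> i j) (structure_at i) (structure_at j) \<and>
               app3 D \<Psi> i j \<circ> app3 D \<Phi> i j = id \<and>
               app3 D \<Phi> i j \<circ> app3 D \<Psi> i j = id)"
    apply (rule bexI[OF _ D])
    apply (rule exI[of _ "HT \<Phi>"], rule exI[of _ "HinvT \<Phi>"])
    using total3_c[OF cH[OF c]] total3_c[OF cHinv[OF c]] h_iso'[OF P] by (simp add: aH aHi)
  have part2: "is_iso (thf \<phi> i j) (structure_at i) (structure_at j) \<and>
               thf \<phi> j i \<circ> thf \<phi> i j = id \<and> thf \<phi> i j \<circ> thf \<phi> j i = id" if ij: "iso_indices i j" for i j
  proof (cases i j rule: linorder_cases)
    case less
    then have "thf \<phi> i j = hf \<phi> i j" "thf \<phi> j i = hinvf \<phi> i j" by (auto simp: thf_def fun_eq_iff)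
    then show ?thesis using h_iso'[OF P ij] by simp
  next
    case equal
    have "thf \<phi> i i = id" by (simp add: thf_def fun_eq_iff)
    then show ?thesis using equal iso_id by simp
  next
    case greater
    have h: "is_iso (hf \<phi> j i) (structure_at j) (structure_at i)" "hinvf \<phi> j i \<circ> hf \<phi> j i = id"
       "hf \<phi> j i \<circ> hinvf \<phi> j i = id"
      using h_iso'[OF P iso_indices_sym[OF ij]] by auto
    have "inv (hf \<phi> j i) = hinvf \<phi> j i" using inv_unique_comp[OF h(3) h(2)] .
    then have "is_iso (hinvf \<phi> j i) (structure_at i) (structure_at j)" using iso_inv[OF h(1)] by simp
    moreover have "thf \<phi> i j = hinvf \<phi> j i" "thf \<phi> j i = hf \<phi> j i" using greater by (auto simp: thf_def fun_eq_iff)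
    ultimately show ?thesis using h by simp
  qed
  have "\<exists>D\<in>d. \<exists>\<Theta>. total3 D \<Theta> \<and>
            (\<forall>i j. iso_indices i j \<longrightarrow>
               is_iso (app3 D \<Theta> i j) (structure_at i) (structure_at j) \<and>
               app3 D \<Theta> j i \<circ> app3 D \<Theta> i j = id \<and>
               app3 D \<Theta> i j \<circ> app3 D \<Theta> j i = id)"
    apply (rule bexI[OF _ D])
    apply (rule exI[of _ "ThT \<Phi>"])
    using total3_c[OF cTh[OF c]] part2 by (simp add: aT)
  then show ?thesis using part1 by blast
qed

end
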